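(* In the setting of a domain $U\subset\mathbb{R}^n$ with $\mathbb{R}^{>0}U\subset U$ and a smooth positive homogeneous function $h$ of degree $k>1$ on $U$ for which $g_U=-\partial^2h$ restricts to a positive definite metric on $\{h=1\}$, let for $c\in\mathbb{R}$ $$g'_c:=-\partial^2\log(h+c)=\frac1{h+c}g_U+\frac1{(h+c)^2}(dh)^2$$ on $U_c:=\{x\in U\mid h(x)+c>0\}$ if $c\le0$ and $U_c:=\{x\in U\mid h(x)-c(k-1)>0\}$ if $c>0$. Then: (1) $g'_c=\frac1{h+c}\check g+\frac{h-c(k-1)}{kh}\frac1{(h+c)^2}(dh)^2$, where $\check g=g_U-\frac{g_U(\xi,\cdot)^2}{g_U(\xi,\xi)}$ and $\xi=\sum x^i\partial_{x^i}$; (2) $g'_c$ is a Riemannian metric on $U_c$; (3) if $cc'>0$, then $(U_c,g'_c)$ and $(U_{c'},g'_{c'})$ are isometric, an isometry being given by restriction of a suitable scalar multiplication $x\mapsto\lambda x$, $\lambda>0$.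
   Context: $\partial^2$ denotes the real Hessian with respect to the linear coordinates $x^1,\dots,x^n$. It is known (and may be used) that $\check g$ is positive semidefinite with kernel $\mathbb{R}\xi$ and $g_U=\check g-\frac{k-1}{kh}(dh)^2$. *)

theory Defs
  imports "HOL-Analysis.Analysis"
begin

definition pd :: "'n::finite \<Rightarrow> (real^'n \<Rightarrow> real) \<Rightarrow> real^'n \<Rightarrow> real" where
  "pd i f x = deriv (\<lambda>t. f (x + t *\<^sub>R axis i 1)) 0"

fun iter_pd :: "'n::finite list \<Rightarrow> (real^'n \<Rightarrow> real) \<Rightarrow> real^'n \<Rightarrow> real" where
  "iter_pd [] f = f"
| "iter_pd (i # is) f = pd i (iter_pd is f)"

definition smooth_on :: "(real^'n::finite) set \<Rightarrow> (real^'n \<Rightarrow> real) \<Rightarrow> bool" where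
  "smooth_on U f \<longleftrightarrow>
     (\<forall>is. continuous_on U (iter_pd is f) \<and>
        (\<forall>i. \<forall>x\<in>U. (\<lambda>t. iter_pd is f (x + t *\<^sub>R axis i 1)) differentiable (at 0)))"

definition hess :: "(real^'n::finite \<Rightarrow> real) \<Rightarrow> real^'n \<Rightarrow> real^'n \<Rightarrow> real^'n \<Rightarrow> real" where
  "hess f x v w = (\<Sum>i\<in>UNIV. \<Sum>j\<in>UNIV. pd i (pd j f) x * v$i * w$j)"

definition dif :: "(real^'n::finite \<Rightarrow> real) \<Rightarrow> real^'n \<Rightarrow> real^'n \<Rightarrow> real" where
  "dif f x v = (\<Sum>i\<in>UNIV. pd i f x * v$i)"

definition gU :: "(real^'n::finite \<Rightarrow> real) \<Rightarrow> real^'n \<Rightarrow> real^'n \<Rightarrow> real^'n \<Rightarrow> real" where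
  "gU h x v w = - hess h x v w"

text \<open>check g = g_U - g_U(xi,.)^2 / g_U(xi,xi), where xi at x is the position vector x.\<close>
definition gcheck :: "(real^'n::finite \<Rightarrow> real) \<Rightarrow> real^'n \<Rightarrow> real^'n \<Rightarrow> real^'n \<Rightarrow> real" where
  "gcheck h x v w = gU h x v w - gU h x x v * gU h x x w / gU h x x x"

definition gprime :: "(real^'n::finite \<Rightarrow> real) \<Rightarrow> real \<Rightarrow> real^'n \<Rightarrow> real^'n \<Rightarrow> real^'n \<Rightarrow> real" where
  "gprime h c x v w = - hess (\<lambda>y. ln (h y + c)) x v w"

definition Uc :: "(real^'n::finite) set \<Rightarrow> (real^'n \<Rightarrow> real) \<Rightarrow> real \<Rightarrow> real \<Rightarrow> (real^'n) set" where
  "Uc U h k c = (if c \<le> 0 then {x\<in>U. h x + c > 0} else {x\<in>U. h x - c * (k - 1) > 0})"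

end

theory Submission
  imports Defs
begin

definition ld :: "(real^'n::finite \<Rightarrow> real) \<Rightarrow> real^'n \<Rightarrow> 'n \<Rightarrow> bool" where
  "ld f x i \<longleftrightarrow> (\<lambda>t. f (x + t *\<^sub>R axis i 1)) differentiable (at 0)"

lemma pd_has:
  assumes "ld f x i"
  shows "((\<lambda>t. f (x + t *\<^sub>R axis i 1)) has_real_derivative pd i f x) (at 0)"
  using assms unfolding pd_def ld_def by (simp add: DERIV_deriv_iff_real_differentiable)

lemma has_pd:
  assumes "((\<lambda>t. f (x + t *\<^sub>R axis i 1)) has_real_derivative D) (at 0)"
  shows "ld f x i" "pd i f x = D"
  using assms unfolding pd_def ld_def
  by (auto simp: real_differentiable_def intro: DERIV_imp_deriv)

lemma line_shift:
  assumes "ld f (y + s *\<^sub>R axis i 1) i"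
  shows "((\<lambda>t. f (y + t *\<^sub>R axis i 1)) has_real_derivative pd i f (y + s *\<^sub>R axis i 1)) (at s)"
proof -
  have "((\<lambda>t. f ((y + s *\<^sub>R axis i 1) + t *\<^sub>R axis i 1)) has_real_derivative pd i f (y + s *\<^sub>R axis i 1)) (at 0)"
    by (rule pd_has[OF assms])
  then have "((\<lambda>t. f (y + (t + s) *\<^sub>R axis i 1)) has_real_derivative pd i f (y + s *\<^sub>R axis i 1)) (at 0)"
    by (simp add: algebra_simps scaleR_add_left)
  then show ?thesis using DERIV_shift[of "\<lambda>t. f (y + t *\<^sub>R axis i 1)" _ 0 s] by simp
qed

lemma ev_line:
  fixes x :: "real^'n"
  assumes "open V" "x \<in> V"
  shows "eventually (\<lambda>t. x + t *\<^sub>R axis i 1 \<in> V) (nhds 0)"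
proof -
  obtain e where e: "e > 0" "ball x e \<subseteq> V" using assms open_contains_ball by blast
  show ?thesis unfolding eventually_nhds_metric
  proof (intro exI[of _ e] conjI allI impI)
    fix t :: real assume "dist t 0 < e"
    then have "dist x (x + t *\<^sub>R axis i 1) < e" by (simp add: dist_norm)
    then show "x + t *\<^sub>R axis i 1 \<in> V" using e by auto
  qed (use e in auto)
qed

lemma pd_local:
  assumes "open V" "x \<in> V" "\<forall>y\<in>V. f y = g y"
  shows "pd i f x = pd i g x"
  unfolding pd_def
  by (rule deriv_cong_ev[OF _ refl]) (use ev_line[OF assms(1,2), of i] assms(3) in \<open>auto elim: eventually_mono\<close>)

lemma ld_local:
  assumes "open V" "x \<in> V" "\<forall>y\<in>V. f y = g y" "ld f x i"
  shows "ld g x i"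
proof -
  have ev: "eventually (\<lambda>t. f (x + t *\<^sub>R axis i 1) = g (x + t *\<^sub>R axis i 1)) (nhds 0)"
    using ev_line[OF assms(1,2), of i] assms(3) by (auto elim: eventually_mono)
  from assms(4) obtain D where "((\<lambda>t. f (x + t *\<^sub>R axis i 1)) has_real_derivative D) (at 0)"
    unfolding ld_def real_differentiable_def by blast
  then have "((\<lambda>t. g (x + t *\<^sub>R axis i 1)) has_real_derivative D) (at 0)"
    using DERIV_cong_ev[OF refl ev refl] by simp
  then show ?thesis unfolding ld_def real_differentiable_def by blast
qed

lemma iter_pd_local:
  assumes "open V" "\<forall>y\<in>V. f y = g y"
  shows "\<forall>y\<in>V. iter_pd is f y = iter_pd is g y"
  using assms by (induction "is") (auto intro: pd_local)

lemma mvt0: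
  fixes f f' :: "real \<Rightarrow> real"
  assumes "\<forall>r. \<bar>r\<bar> \<le> \<bar>s\<bar> \<longrightarrow> (f has_real_derivative f' r) (at r)"
  shows "\<exists>z. \<bar>z\<bar> \<le> \<bar>s\<bar> \<and> f s - f 0 = s * f' z"
proof (cases "s = 0")
  case True then show ?thesis by auto
next
  case False
  show ?thesis
  proof (cases "s > 0")
    case True
    obtain z where "0 < z" "z < s" "f s - f 0 = (s - 0) * f' z"
      using MVT2[OF True, of f f'] assms by auto
    then show ?thesis by (intro exI[of _ z]) auto
  next
    case False
    then have "s < 0" using \<open>s \<noteq> 0\<close> by auto
    obtain z where "s < z" "z < 0" "f 0 - f s = (0 - s) * f' z"
      using MVT2[OF \<open>s < 0\<close>, of f f'] assms by auto
    then show ?thesis by (intro exI[of _ z]) (auto simp: algebra_simps)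
  qed
qed

lemma sum_axis_vec:
  fixes v :: "real^'n"
  shows "(\<Sum>i\<in>UNIV. v$i *\<^sub>R axis i (1::real)) = v"
  by (simp add: vec_eq_iff sum_component axis_def if_distrib[of "(*) _"] cong: if_cong)

lemma norm_sum_axis_le:
  fixes v :: "real^'n"
  shows "norm (\<Sum>i\<in>S. v$i *\<^sub>R axis i (1::real)) \<le> real (card (UNIV::'n set)) * norm v"
proof -
  have "norm (\<Sum>i\<in>S. v$i *\<^sub>R axis i (1::real)) \<le> (\<Sum>i\<in>S. norm (v$i *\<^sub>R axis i (1::real)))"
    by (rule norm_sum)
  also have "\<dots> = (\<Sum>i\<in>S. \<bar>v$i\<bar>)" by simp
  also have "\<dots> \<le> (\<Sum>i\<in>S. norm v)" by (intro sum_mono component_le_norm_cart)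
  also have "\<dots> = real (card S) * norm v" by simp
  also have "\<dots> \<le> real (card (UNIV::'n set)) * norm v"
    by (intro mult_right_mono) (auto intro: card_mono)
  finally show ?thesis .
qed

lemma fr_lemma:
  fixes f :: "real^'n \<Rightarrow> real"
  assumes U: "open U" "x \<in> U" and ldf: "\<forall>i. \<forall>y\<in>U. ld f y i"
    and cont: "\<forall>i. continuous_on U (pd i f)"
  shows "(f has_derivative (\<lambda>v. \<Sum>i\<in>UNIV. pd i f x * v$i)) (at x)"
proof -
  define N where "N = real (card (UNIV::'n set))"
  obtain r where r: "r > 0" "ball x r \<subseteq> U" using U open_contains_ball by blast
  have claim: "\<forall>e>0. \<exists>d>0. \<forall>v. norm v < d \<longrightarrow>
      \<bar>f (x + (\<Sum>i\<in>S. v$i *\<^sub>R axis i 1)) - f x - (\<Sum>i\<in>S. pd i f x * v$i)\<bar> \<le> e * norm v"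
    if "finite S" for S :: "'n set"
    using that
  proof (induction S rule: finite_induct)
    case empty
    then show ?case by (auto intro: exI[of _ 1])
  next
    case (insert a S)
    show ?case
    proof (intro allI impI)
      fix e :: real assume e: "e > 0"
      obtain d1 where d1: "d1 > 0" "\<forall>v. norm v < d1 \<longrightarrow>
          \<bar>f (x + (\<Sum>i\<in>S. v$i *\<^sub>R axis i 1)) - f x - (\<Sum>i\<in>S. pd i f x * v$i)\<bar> \<le> e/2 * norm v"
        using insert.IH e by (meson half_gt_zero)
      obtain d2 where d2: "d2 > 0" "\<forall>z\<in>U. dist z x < d2 \<longrightarrow> dist (pd a f z) (pd a f x) < e/2"
        using cont U(2) e unfolding continuous_on_iff by (meson half_gt_zero)
      define d where "d = min d1 (min d2 r / (N + 1))"
      have N0: "N \<ge> 0" by (simp add: N_def)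
      have d0: "d > 0" using d1 d2 r N0 by (simp add: d_def)
      show "\<exists>d>0. \<forall>v. norm v < d \<longrightarrow>
          \<bar>f (x + (\<Sum>i\<in>insert a S. v$i *\<^sub>R axis i 1)) - f x - (\<Sum>i\<in>insert a S. pd i f x * v$i)\<bar> \<le> e * norm v"
      proof (intro exI[of _ d] conjI allI impI d0)
        fix v :: "real^'n" assume nv: "norm v < d"
        define y where "y = x + (\<Sum>i\<in>S. v$i *\<^sub>R axis i 1)"
        have ny: "norm (y - x) \<le> N * norm v" unfolding y_def N_def using norm_sum_axis_le by simp
        have va: "\<bar>v$a\<bar> \<le> norm v" by (rule component_le_norm_cart)
        have small: "(N + 1) * norm v < min d2 r"
        proof -
          have "norm v < min d2 r / (N + 1)" using nv by (simp add: d_def)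
          then show ?thesis using N0 by (simp add: field_simps)
        qed
        have inU: "y + t *\<^sub>R axis a 1 \<in> U \<and> dist (y + t *\<^sub>R axis a 1) x < d2" if "\<bar>t\<bar> \<le> \<bar>v$a\<bar>" for t
        proof -
          have "norm (y + t *\<^sub>R axis a 1 - x) = norm ((y - x) + t *\<^sub>R axis a 1)"
            by (simp add: algebra_simps)
          also have "\<dots> \<le> norm (y - x) + norm (t *\<^sub>R axis a (1::real))"
            by (rule norm_triangle_ineq)
          also have "\<dots> \<le> N * norm v + norm v" using ny that va by simp
          also have "\<dots> < min d2 r" using small by (simp add: distrib_right)
          finally have "norm (y + t *\<^sub>R axis a 1 - x) < min d2 r" .
          then show ?thesis using r by (auto simp: dist_norm norm_minus_commute)
        qed
        have "\<forall>t. \<bar>t\<bar> \<le> \<bar>v$a\<bar> \<longrightarrow> ((\<lambda>t. f (y + t *\<^sub>R axis a 1)) has_real_derivative pd a f (y + t *\<^sub>R axis a 1)) (at t)"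
          using inU ldf by (auto intro!: line_shift)
        from mvt0[OF this] obtain z where z: "\<bar>z\<bar> \<le> \<bar>v$a\<bar>"
          "f (y + v$a *\<^sub>R axis a 1) - f y = v$a * pd a f (y + z *\<^sub>R axis a 1)" by auto
        have "\<bar>pd a f (y + z *\<^sub>R axis a 1) - pd a f x\<bar> < e/2"
          using d2(2) inU[OF z(1)] by (auto simp: dist_real_def)
        then have A: "\<bar>f (y + v$a *\<^sub>R axis a 1) - f y - pd a f x * v$a\<bar> \<le> e/2 * norm v"
        proof -
          have "\<bar>f (y + v$a *\<^sub>R axis a 1) - f y - pd a f x * v$a\<bar> = \<bar>v$a\<bar> * \<bar>pd a f (y + z *\<^sub>R axis a 1) - pd a f x\<bar>"
            using z(2) by (simp add: abs_mult[symmetric] algebra_simps)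
          also have "\<dots> \<le> norm v * (e/2)"
            using \<open>\<bar>pd a f (y + z *\<^sub>R axis a 1) - pd a f x\<bar> < e/2\<close> va
            by (intro mult_mono) auto
          finally show ?thesis by (simp add: mult.commute)
        qed
        have B: "\<bar>f y - f x - (\<Sum>i\<in>S. pd i f x * v$i)\<bar> \<le> e/2 * norm v"
          using d1(2) nv unfolding y_def d_def by auto
        have eq: "x + (\<Sum>i\<in>insert a S. v$i *\<^sub>R axis i 1) = y + v$a *\<^sub>R axis a 1"
          using insert.hyps by (simp add: y_def algebra_simps)
        have eq2: "(\<Sum>i\<in>insert a S. pd i f x * v$i) = pd a f x * v$a + (\<Sum>i\<in>S. pd i f x * v$i)"
          using insert.hyps by simp
        show "\<bar>f (x + (\<Sum>i\<in>insert a S. v$i *\<^sub>R axis i 1)) - f x - (\<Sum>i\<in>insert a S. pd i f x * v$i)\<bar> \<le> e * norm v"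
          unfolding eq eq2 using A B by linarith
      qed
    qed
  qed
  have bl: "bounded_linear (\<lambda>v. \<Sum>i\<in>UNIV. pd i f x * v$i)"
  proof -
    have "(\<lambda>v. \<Sum>i\<in>UNIV. pd i f x * v$i) = (\<lambda>v. v \<bullet> (\<chi> i. pd i f x))"
      by (auto simp: inner_vec_def mult.commute)
    then show ?thesis by (simp add: bounded_linear_inner_left)
  qed
  show ?thesis unfolding has_derivative_at_alt
  proof (intro conjI bl allI impI)
    fix e :: real assume "e > 0"
    then obtain d where d: "d > 0" "\<forall>v. norm v < d \<longrightarrow>
      \<bar>f (x + (\<Sum>i\<in>UNIV. v$i *\<^sub>R axis i 1)) - f x - (\<Sum>i\<in>UNIV. pd i f x * v$i)\<bar> \<le> e * norm v"
      using claim[of UNIV] by auto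
    show "\<exists>d>0. \<forall>y. norm (y - x) < d \<longrightarrow> norm (f y - f x - (\<Sum>i\<in>UNIV. pd i f x * (y - x)$i)) \<le> e * norm (y - x)"
    proof (intro exI[of _ d] conjI allI impI d)
      fix y assume "norm (y - x) < d"
      then show "norm (f y - f x - (\<Sum>i\<in>UNIV. pd i f x * (y - x)$i)) \<le> e * norm (y - x)"
        using d(2)[rule_format, of "y - x"] sum_axis_vec[of "y - x"] by simp
    qed
  qed
qed

lemma schwarz_aux:
  fixes f :: "real^'n \<Rightarrow> real" and x :: "real^'n"
  assumes inU: "\<And>a b. \<bar>a\<bar> \<le> \<bar>s\<bar> \<Longrightarrow> \<bar>b\<bar> \<le> \<bar>s\<bar> \<Longrightarrow> x + a *\<^sub>R axis i 1 + b *\<^sub>R axis j 1 \<in> U"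
    and ldi: "\<forall>y\<in>U. ld f y i" and ldj: "\<forall>y\<in>U. ld (pd i f) y j"
  shows "\<exists>a b. \<bar>a\<bar> \<le> \<bar>s\<bar> \<and> \<bar>b\<bar> \<le> \<bar>s\<bar> \<and>
     f (x + s *\<^sub>R axis i 1 + s *\<^sub>R axis j 1) - f (x + s *\<^sub>R axis i 1) - f (x + s *\<^sub>R axis j 1) + f x
       = s * s * pd j (pd i f) (x + a *\<^sub>R axis i 1 + b *\<^sub>R axis j 1)"
proof -
  define P where "P a b = x + a *\<^sub>R axis i 1 + b *\<^sub>R axis j (1::real)" for a b
  have P0: "P a 0 = x + a *\<^sub>R axis i 1" "P 0 b = x + b *\<^sub>R axis j 1" for a b by (simp_all add: P_def)
  have Pi: "P a b = (x + b *\<^sub>R axis j 1) + a *\<^sub>R axis i 1" for a b by (simp add: P_def algebra_simps)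
  have Pj: "P a b = (x + a *\<^sub>R axis i 1) + b *\<^sub>R axis j 1" for a b by (simp add: P_def)
  define \<phi> where "\<phi> a = f (P a s) - f (P a 0)" for a
  have "\<forall>r. \<bar>r\<bar> \<le> \<bar>s\<bar> \<longrightarrow> (\<phi> has_real_derivative (pd i f (P r s) - pd i f (P r 0))) (at r)"
  proof (intro allI impI)
    fix r :: real assume r: "\<bar>r\<bar> \<le> \<bar>s\<bar>"
    have "((\<lambda>a. f ((x + s *\<^sub>R axis j 1) + a *\<^sub>R axis i 1)) has_real_derivative pd i f ((x + s *\<^sub>R axis j 1) + r *\<^sub>R axis i 1)) (at r)"
      by (rule line_shift) (use ldi inU[OF r, of s] in \<open>simp add: algebra_simps\<close>)
    moreover have "((\<lambda>a. f ((x + 0 *\<^sub>R axis j 1) + a *\<^sub>R axis i 1)) has_real_derivative pd i f ((x + 0 *\<^sub>R axis j 1) + r *\<^sub>R axis i 1)) (at r)"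
      by (rule line_shift) (use ldi inU[OF r, of 0] in \<open>simp add: algebra_simps\<close>)
    ultimately show "(\<phi> has_real_derivative (pd i f (P r s) - pd i f (P r 0))) (at r)"
      unfolding \<phi>_def Pi by (intro DERIV_diff)
  qed
  from mvt0[OF this] obtain a where a: "\<bar>a\<bar> \<le> \<bar>s\<bar>" "\<phi> s - \<phi> 0 = s * (pd i f (P a s) - pd i f (P a 0))" by blast
  define \<psi> where "\<psi> b = pd i f (P a b)" for b
  have "\<forall>r. \<bar>r\<bar> \<le> \<bar>s\<bar> \<longrightarrow> (\<psi> has_real_derivative pd j (pd i f) (P a r)) (at r)"
  proof (intro allI impI)
    fix r :: real assume r: "\<bar>r\<bar> \<le> \<bar>s\<bar>"
    show "(\<psi> has_real_derivative pd j (pd i f) (P a r)) (at r)"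
      unfolding \<psi>_def Pj by (rule line_shift) (use ldj inU[OF a(1) r] in \<open>simp add: algebra_simps\<close>)
  qed
  from mvt0[OF this] obtain b where b: "\<bar>b\<bar> \<le> \<bar>s\<bar>" "\<psi> s - \<psi> 0 = s * pd j (pd i f) (P a b)" by blast
  have "f (x + s *\<^sub>R axis i 1 + s *\<^sub>R axis j 1) - f (x + s *\<^sub>R axis i 1) - f (x + s *\<^sub>R axis j 1) + f x
      = \<phi> s - \<phi> 0" by (simp add: \<phi>_def P_def)
  also have "\<dots> = s * (s * pd j (pd i f) (P a b))" using a(2) b(2) by (simp add: \<psi>_def)
  finally show ?thesis using a(1) b(1) by (auto simp: P_def)
qed

lemma abs_aux: "\<bar>p - B\<bar> < \<bar>A - B\<bar> / 2 \<Longrightarrow> \<bar>q - A\<bar> < \<bar>A - B\<bar> / 2 \<Longrightarrow> p = q \<Longrightarrow> False"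
  for p q A B :: real by (simp add: abs_if split: if_splits)

lemma schwarz:
  fixes f :: "real^'n \<Rightarrow> real" and x :: "real^'n"
  assumes U: "open U" "x \<in> U"
    and ldi: "\<forall>y\<in>U. ld f y i" and ldj: "\<forall>y\<in>U. ld f y j"
    and ldij: "\<forall>y\<in>U. ld (pd i f) y j" and ldji: "\<forall>y\<in>U. ld (pd j f) y i"
    and c1: "continuous_on U (pd j (pd i f))" and c2: "continuous_on U (pd i (pd j f))"
  shows "pd i (pd j f) x = pd j (pd i f) x"
proof (rule ccontr)
  assume ne: "pd i (pd j f) x \<noteq> pd j (pd i f) x"
  define \<epsilon> where "\<epsilon> = \<bar>pd i (pd j f) x - pd j (pd i f) x\<bar> / 2"
  have e0: "\<epsilon> > 0" using ne by (simp add: \<epsilon>_def)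
  obtain d1 where d1: "d1 > 0" "\<forall>z\<in>U. dist z x < d1 \<longrightarrow> dist (pd j (pd i f) z) (pd j (pd i f) x) < \<epsilon>"
    using c1 U(2) e0 unfolding continuous_on_iff by meson
  obtain d2 where d2: "d2 > 0" "\<forall>z\<in>U. dist z x < d2 \<longrightarrow> dist (pd i (pd j f) z) (pd i (pd j f) x) < \<epsilon>"
    using c2 U(2) e0 unfolding continuous_on_iff by meson
  obtain r where r: "r > 0" "ball x r \<subseteq> U" using U open_contains_ball by blast
  define s where "s = min r (min d1 d2) / 3"
  have s0: "s > 0" using r d1 d2 by (simp add: s_def)
  have close: "dist (x + a *\<^sub>R axis p 1 + b *\<^sub>R axis q 1) x < min r (min d1 d2)"
    if "\<bar>a\<bar> \<le> \<bar>s\<bar>" "\<bar>b\<bar> \<le> \<bar>s\<bar>" for a b p q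
  proof -
    have "dist (x + a *\<^sub>R axis p 1 + b *\<^sub>R axis q 1) x = norm (a *\<^sub>R axis p 1 + b *\<^sub>R axis q (1::real))"
      by (simp add: dist_norm)
    also have "\<dots> \<le> norm (a *\<^sub>R axis p (1::real)) + norm (b *\<^sub>R axis q (1::real))" by (rule norm_triangle_ineq)
    also have "\<dots> \<le> 2 * s" using that s0 by simp
    also have "\<dots> < min r (min d1 d2)" using s0 unfolding s_def by linarith
    finally show ?thesis .
  qed
  have inU: "x + a *\<^sub>R axis p 1 + b *\<^sub>R axis q 1 \<in> U" if "\<bar>a\<bar> \<le> \<bar>s\<bar>" "\<bar>b\<bar> \<le> \<bar>s\<bar>" for a b p q
    using close[OF that, of p q] r by (auto simp: dist_commute)
  obtain a b where ab: "\<bar>a\<bar> \<le> \<bar>s\<bar>" "\<bar>b\<bar> \<le> \<bar>s\<bar>"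
    "f (x + s *\<^sub>R axis i 1 + s *\<^sub>R axis j 1) - f (x + s *\<^sub>R axis i 1) - f (x + s *\<^sub>R axis j 1) + f x
       = s * s * pd j (pd i f) (x + a *\<^sub>R axis i 1 + b *\<^sub>R axis j 1)"
    using schwarz_aux[of s x i j U f, OF inU ldi ldij] by blast
  obtain a' b' where ab': "\<bar>a'\<bar> \<le> \<bar>s\<bar>" "\<bar>b'\<bar> \<le> \<bar>s\<bar>"
    "f (x + s *\<^sub>R axis j 1 + s *\<^sub>R axis i 1) - f (x + s *\<^sub>R axis j 1) - f (x + s *\<^sub>R axis i 1) + f x
       = s * s * pd i (pd j f) (x + a' *\<^sub>R axis j 1 + b' *\<^sub>R axis i 1)"
    using schwarz_aux[of s x j i U f, OF inU ldj ldji] by blast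
  have "x + s *\<^sub>R axis j 1 + s *\<^sub>R axis i 1 = x + s *\<^sub>R axis i 1 + s *\<^sub>R axis j (1::real)"
    by (simp add: algebra_simps)
  have E: "f (x + s *\<^sub>R axis j 1 + s *\<^sub>R axis i 1) = f (x + s *\<^sub>R axis i 1 + s *\<^sub>R axis j 1)"
    by (rule arg_cong[where f=f]) (simp add: algebra_simps)
  have "s * s * pd j (pd i f) (x + a *\<^sub>R axis i 1 + b *\<^sub>R axis j 1)
      = s * s * pd i (pd j f) (x + a' *\<^sub>R axis j 1 + b' *\<^sub>R axis i 1)"
    using ab(3) ab'(3) E by linarith
  then have eq: "pd j (pd i f) (x + a *\<^sub>R axis i 1 + b *\<^sub>R axis j 1)
      = pd i (pd j f) (x + a' *\<^sub>R axis j 1 + b' *\<^sub>R axis i 1)" using s0 by simp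
  have "dist (pd j (pd i f) (x + a *\<^sub>R axis i 1 + b *\<^sub>R axis j 1)) (pd j (pd i f) x) < \<epsilon>"
    using d1(2) inU[OF ab(1,2)] close[OF ab(1,2)] by auto
  moreover have "dist (pd i (pd j f) (x + a' *\<^sub>R axis j 1 + b' *\<^sub>R axis i 1)) (pd i (pd j f) x) < \<epsilon>"
    using d2(2) inU[OF ab'(1,2)] close[OF ab'(1,2)] by auto
  ultimately show False using eq abs_aux unfolding dist_real_def \<epsilon>_def by blast
qed

lemma pd_hom:
  fixes g :: "real^'n \<Rightarrow> real"
  assumes U: "open U" and cone: "\<forall>t>0. \<forall>x\<in>U. t *\<^sub>R x \<in> U"
    and hom: "\<forall>t>0. \<forall>y\<in>U. g (t *\<^sub>R y) = t powr m * g y"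
    and ldg: "\<forall>y\<in>U. ld g y i" and t: "t > 0" and y: "y \<in> U"
  shows "pd i g (t *\<^sub>R y) = t powr (m - 1) * pd i g y"
proof -
  obtain r where r: "r > 0" "ball y r \<subseteq> U" using U y open_contains_ball by blast
  have ev: "eventually (\<lambda>s. g (t *\<^sub>R y + s *\<^sub>R axis i 1) = t powr m * g (y + (s / t) *\<^sub>R axis i 1)) (nhds 0)"
    unfolding eventually_nhds_metric
  proof (intro exI[of _ "r * t"] conjI allI impI)
    show "r * t > 0" using r t by simp
    fix s :: real assume "dist s 0 < r * t"
    then have "\<bar>s / t\<bar> < r" using t by (simp add: field_simps abs_divide)
    then have "y + (s / t) *\<^sub>R axis i 1 \<in> U" using r by (auto simp: dist_norm)
    moreover have "t *\<^sub>R y + s *\<^sub>R axis i 1 = t *\<^sub>R (y + (s / t) *\<^sub>R axis i 1)"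
      using t by (simp add: scaleR_add_right)
    ultimately show "g (t *\<^sub>R y + s *\<^sub>R axis i 1) = t powr m * g (y + (s / t) *\<^sub>R axis i 1)"
      using hom t by simp
  qed
  have G: "((\<lambda>r. g (y + r *\<^sub>R axis i 1)) has_real_derivative pd i g y) (at (0 / t))"
    using pd_has[of g y i] ldg y by simp
  have "((\<lambda>s. s / t) has_real_derivative 1 / t) (at 0)"
    using t by (auto intro!: derivative_eq_intros)
  from DERIV_chain2[OF G this]
  have "((\<lambda>s. g (y + (s / t) *\<^sub>R axis i 1)) has_real_derivative pd i g y * (1 / t)) (at 0)" .
  then have "((\<lambda>s. t powr m * g (y + (s / t) *\<^sub>R axis i 1)) has_real_derivative t powr m * (pd i g y * (1 / t))) (at 0)"
    by (rule DERIV_cmult)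
  then have "((\<lambda>s. g (t *\<^sub>R y + s *\<^sub>R axis i 1)) has_real_derivative t powr m * (pd i g y * (1 / t))) (at 0)"
    using DERIV_cong_ev[OF refl ev refl] by simp
  then have "pd i g (t *\<^sub>R y) = t powr m * (pd i g y * (1 / t))" by (rule has_pd)
  also have "\<dots> = t powr (m - 1) * pd i g y" using t by (simp add: powr_diff)
  finally show ?thesis .
qed

lemma euler:
  fixes g :: "real^'n \<Rightarrow> real"
  assumes U: "open U" and cone: "\<forall>t>0. \<forall>x\<in>U. t *\<^sub>R x \<in> U"
    and hom: "\<forall>t>0. \<forall>y\<in>U. g (t *\<^sub>R y) = t powr m * g y"
    and ldg: "\<forall>i. \<forall>y\<in>U. ld g y i" and cont: "\<forall>i. continuous_on U (pd i g)" and x: "x \<in> U"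
  shows "(\<Sum>i\<in>UNIV. pd i g x * x$i) = m * g x"
proof -
  have L: "(g has_derivative (\<lambda>v. \<Sum>i\<in>UNIV. pd i g x * v$i)) (at (1 *\<^sub>R x))"
    using fr_lemma[OF U x ldg cont] by simp
  have "((\<lambda>t. t *\<^sub>R x) has_derivative (\<lambda>t. t *\<^sub>R x)) (at 1)"
    by (auto intro!: derivative_eq_intros)
  from has_derivative_compose[OF this L]
  have "((\<lambda>t. g (t *\<^sub>R x)) has_derivative (\<lambda>t. \<Sum>i\<in>UNIV. pd i g x * (t *\<^sub>R x)$i)) (at 1)" .
  then have D1: "((\<lambda>t. g (t *\<^sub>R x)) has_real_derivative (\<Sum>i\<in>UNIV. pd i g x * x$i)) (at 1)"
    by (rule has_derivative_imp_has_field_derivative) (simp add: sum_distrib_left algebra_simps)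
  have ev: "eventually (\<lambda>t. t powr m * g x = g (t *\<^sub>R x)) (nhds (1::real))"
  proof -
    have "eventually (\<lambda>t. t \<in> {0<..}) (nhds (1::real))"
      by (rule eventually_nhds_in_open) auto
    then show ?thesis by (rule eventually_mono) (use hom x in auto)
  qed
  have "((\<lambda>t. t powr m * g x) has_real_derivative m * 1 powr (m - 1) * g x) (at 1)"
    by (intro DERIV_cmult_right has_real_derivative_powr) simp
  then have D2: "((\<lambda>t. g (t *\<^sub>R x)) has_real_derivative m * g x) (at 1)"
    using DERIV_cong_ev[OF refl ev refl] by simp
  show ?thesis using DERIV_unique[OF D1 D2] .
qed

lemma smooth_coind:
  fixes V :: "(real^'n) set" and S :: "(real^'n \<Rightarrow> real) set"
  assumes V: "open V"
    and Sc: "\<forall>f\<in>S. continuous_on V f"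
    and Sd: "\<forall>f\<in>S. \<forall>i. \<forall>x\<in>V. ld f x i"
    and Sp: "\<forall>f\<in>S. \<forall>i. \<exists>g\<in>S. \<forall>x\<in>V. pd i f x = g x"
    and g: "g \<in> S" and fg: "\<forall>x\<in>V. f x = g x"
  shows "smooth_on V f"
proof -
  have claim: "\<forall>g\<in>S. \<exists>g'\<in>S. \<forall>x\<in>V. iter_pd is g x = g' x" for "is"
  proof (induction "is")
    case Nil then show ?case by auto
  next
    case (Cons i "is")
    show ?case
    proof
      fix g assume "g \<in> S"
      then obtain g' where g': "g' \<in> S" "\<forall>x\<in>V. iter_pd is g x = g' x" using Cons by blast
      then obtain g'' where g'': "g'' \<in> S" "\<forall>x\<in>V. pd i g' x = g'' x" using Sp by blast
      have "\<forall>x\<in>V. iter_pd (i # is) g x = g'' x"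
        using pd_local[OF V _ g'(2)] g''(2) by simp
      then show "\<exists>g'\<in>S. \<forall>x\<in>V. iter_pd (i # is) g x = g' x" using g'' by blast
    qed
  qed
  show ?thesis unfolding smooth_on_def
  proof (intro allI conjI ballI)
    fix "is"
    obtain g' where g': "g' \<in> S" "\<forall>x\<in>V. iter_pd is g x = g' x" using claim g by blast
    have eq: "\<forall>x\<in>V. g' x = iter_pd is f x"
      using iter_pd_local[OF V fg, of "is"] g'(2) by simp
    show "continuous_on V (iter_pd is f)"
      using Sc g'(1) continuous_on_cong[OF refl, of V g' "iter_pd is f"] eq by auto
    fix i x assume x: "x \<in> V"
    have "ld (iter_pd is f) x i" by (rule ld_local[OF V x eq]) (use Sd g'(1) x in auto)
    then show "(\<lambda>t. iter_pd is f (x + t *\<^sub>R axis i 1)) differentiable at 0" unfolding ld_def .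
  qed
qed

inductive_set SS :: "(real^'n::finite \<Rightarrow> real) \<Rightarrow> real \<Rightarrow> (real^'n \<Rightarrow> real) set" for h c where
  it: "iter_pd is h \<in> SS h c"
| rc: "(\<lambda>x. 1 / (h x + c)) \<in> SS h c"
| cst: "(\<lambda>x. a) \<in> SS h c"
| add: "f \<in> SS h c \<Longrightarrow> g \<in> SS h c \<Longrightarrow> (\<lambda>x. f x + g x) \<in> SS h c"
| mul: "f \<in> SS h c \<Longrightarrow> g \<in> SS h c \<Longrightarrow> (\<lambda>x. f x * g x) \<in> SS h c"

lemma smooth_cont: "smooth_on U h \<Longrightarrow> continuous_on U (iter_pd is h)"
  by (simp add: smooth_on_def)

lemma smooth_ld: "smooth_on U h \<Longrightarrow> x \<in> U \<Longrightarrow> ld (iter_pd is h) x i"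
  by (simp add: smooth_on_def ld_def)

lemma pd_const: "pd i (\<lambda>x. a) x = 0"
  unfolding pd_def by (rule DERIV_imp_deriv) simp

lemma SS_props:
  fixes h :: "real^'n \<Rightarrow> real"
  assumes V: "open V" "V \<subseteq> U" and hs: "smooth_on U h" and hc: "\<forall>x\<in>V. h x + c > 0"
    and f: "f \<in> SS h c"
  shows "continuous_on V f \<and> (\<forall>i. \<forall>x\<in>V. ld f x i) \<and> (\<forall>i. \<exists>g\<in>SS h c. \<forall>x\<in>V. pd i f x = g x)"
  using f
proof (induction rule: SS.induct)
  case (it "is")
  have "continuous_on V (iter_pd is h)"
    using continuous_on_subset[OF smooth_cont[OF hs] V(2)] .
  moreover have "\<forall>i. \<forall>x\<in>V. ld (iter_pd is h) x i"
    using smooth_ld[OF hs] V(2) by auto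
  moreover have "\<forall>i. \<exists>g\<in>SS h c. \<forall>x\<in>V. pd i (iter_pd is h) x = g x"
  proof
    fix i
    have "iter_pd (i # is) h \<in> SS h c" by (rule SS.it)
    moreover have "\<forall>x\<in>V. pd i (iter_pd is h) x = iter_pd (i # is) h x" by simp
    ultimately show "\<exists>g\<in>SS h c. \<forall>x\<in>V. pd i (iter_pd is h) x = g x" by blast
  qed
  ultimately show ?case by blast
next
  case rc
  have hcont: "continuous_on V h"
    using continuous_on_subset[OF smooth_cont[OF hs, of "[]"] V(2)] by simp
  have hld: "ld h x i" if "x \<in> V" for x i
    using smooth_ld[OF hs, of x "[]" i] V(2) that by auto
  have der: "((\<lambda>t. 1 / (h (x + t *\<^sub>R axis i 1) + c)) has_real_derivative
       (- iter_pd [i] h x * (1 / (h x + c))) * (1 / (h x + c))) (at 0)" if x: "x \<in> V" for x i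
  proof -
    have d1: "((\<lambda>t. h (x + t *\<^sub>R axis i 1) + c) has_real_derivative pd i h x + 0) (at 0)"
      by (intro DERIV_add pd_has hld[OF x] DERIV_const)
    have nz: "h (x + 0 *\<^sub>R axis i 1) + c \<noteq> 0" using bspec[OF hc x] by simp
    have "((\<lambda>t. inverse (h (x + t *\<^sub>R axis i 1) + c)) has_real_derivative
        - ((pd i h x + 0) * inverse ((h (x + 0 *\<^sub>R axis i 1) + c) ^ Suc (Suc 0)))) (at 0)"
      using DERIV_inverse_fun[OF d1 nz] .
    moreover have "- ((pd i h x + 0) * inverse ((h (x + 0 *\<^sub>R axis i 1) + c) ^ Suc (Suc 0)))
       = (- iter_pd [i] h x * (1 / (h x + c))) * (1 / (h x + c))"
      by (simp add: divide_inverse power2_eq_square)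
    ultimately show ?thesis by (simp add: divide_inverse mult.assoc)
  qed
  have "continuous_on V (\<lambda>x. 1 / (h x + c))"
    using hc by (intro continuous_intros hcont) auto
  moreover have "\<forall>i. \<forall>x\<in>V. ld (\<lambda>x. 1 / (h x + c)) x i"
    using has_pd(1)[OF der] by blast
  moreover have "\<forall>i. \<exists>g\<in>SS h c. \<forall>x\<in>V. pd i (\<lambda>x. 1 / (h x + c)) x = g x"
  proof
    fix i
    have m: "(\<lambda>x. (- iter_pd [i] h x * (1 / (h x + c))) * (1 / (h x + c))) \<in> SS h c"
      using SS.mul[OF SS.mul[OF SS.mul[OF SS.cst[of "-1"] SS.it[of "[i]"]] SS.rc] SS.rc] by simp
    have "\<forall>x\<in>V. pd i (\<lambda>x. 1 / (h x + c)) x = (- iter_pd [i] h x * (1 / (h x + c))) * (1 / (h x + c))"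
      using has_pd(2)[OF der] by blast
    then show "\<exists>g\<in>SS h c. \<forall>x\<in>V. pd i (\<lambda>x. 1 / (h x + c)) x = g x"
      by (intro bexI[OF _ m]) auto
  qed
  ultimately show ?case by blast
next
  case (cst a)
  have "\<forall>i. \<forall>x\<in>V. ld (\<lambda>x. a) x i" by (simp add: ld_def)
  moreover have "\<forall>i. \<forall>x\<in>V. pd i (\<lambda>x. a) x = (\<lambda>x. 0) x"
    unfolding pd_def by (auto intro: DERIV_imp_deriv)
  moreover have "(\<lambda>x. 0) \<in> SS h c" by (rule SS.cst)
  ultimately show ?case by auto
next
  case (add f g)
  have der: "((\<lambda>t. (\<lambda>x. f x + g x) (x + t *\<^sub>R axis i 1)) has_real_derivative pd i f x + pd i g x) (at 0)"
    if "x \<in> V" for x i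
    using add.IH that by (auto intro!: DERIV_add pd_has)
  have "continuous_on V (\<lambda>x. f x + g x)" using add.IH by (intro continuous_intros) auto
  moreover have "\<forall>i. \<forall>x\<in>V. ld (\<lambda>x. f x + g x) x i" using has_pd(1)[OF der] by blast
  moreover have "\<forall>i. \<exists>G\<in>SS h c. \<forall>x\<in>V. pd i (\<lambda>x. f x + g x) x = G x"
  proof
    fix i
    obtain F G where F: "F \<in> SS h c" "\<forall>x\<in>V. pd i f x = F x" and G: "G \<in> SS h c" "\<forall>x\<in>V. pd i g x = G x"
      using add.IH by blast
    have "\<forall>x\<in>V. pd i (\<lambda>x. f x + g x) x = F x + G x" using has_pd(2)[OF der] F G by simp
    then show "\<exists>H\<in>SS h c. \<forall>x\<in>V. pd i (\<lambda>x. f x + g x) x = H x"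
      by (intro bexI[OF _ SS.add[OF F(1) G(1)]]) auto
  qed
  ultimately show ?case by blast
next
  case (mul f g)
  have der: "((\<lambda>t. (\<lambda>x. f x * g x) (x + t *\<^sub>R axis i 1)) has_real_derivative pd i f x * g x + f x * pd i g x) (at 0)"
    if "x \<in> V" for x i
  proof -
    have "((\<lambda>t. f (x + t *\<^sub>R axis i 1) * g (x + t *\<^sub>R axis i 1)) has_real_derivative
        pd i f x * g (x + 0 *\<^sub>R axis i 1) + pd i g x * f (x + 0 *\<^sub>R axis i 1)) (at 0)"
      using mul.IH that by (intro DERIV_mult pd_has) auto
    then show ?thesis by (simp add: mult.commute)
  qed
  have "continuous_on V (\<lambda>x. f x * g x)" using mul.IH by (intro continuous_intros) auto
  moreover have "\<forall>i. \<forall>x\<in>V. ld (\<lambda>x. f x * g x) x i" using has_pd(1)[OF der] by blast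
  moreover have "\<forall>i. \<exists>G\<in>SS h c. \<forall>x\<in>V. pd i (\<lambda>x. f x * g x) x = G x"
  proof
    fix i
    obtain F G where F: "F \<in> SS h c" "\<forall>x\<in>V. pd i f x = F x" and G: "G \<in> SS h c" "\<forall>x\<in>V. pd i g x = G x"
      using mul.IH by blast
    have m: "(\<lambda>x. F x * g x + f x * G x) \<in> SS h c"
      using SS.add[OF SS.mul[OF F(1) mul.hyps(2)] SS.mul[OF mul.hyps(1) G(1)]] .
    have "\<forall>x\<in>V. pd i (\<lambda>x. f x * g x) x = F x * g x + f x * G x" using has_pd(2)[OF der] F G by simp
    then show "\<exists>H\<in>SS h c. \<forall>x\<in>V. pd i (\<lambda>x. f x * g x) x = H x"
      by (intro bexI[OF _ m]) auto
  qed
  ultimately show ?case by blast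
qed

lemma alg1:
  fixes q :: real
  assumes "q \<noteq> 0" "finite A" "finite B"
  shows "- (\<Sum>i\<in>A. \<Sum>j\<in>B. (H i j * q - g j * g i) / (q * q) * v i * w j)
    = 1 / q * (- (\<Sum>i\<in>A. \<Sum>j\<in>B. H i j * v i * w j)) + 1 / q^2 * (\<Sum>i\<in>A. g i * v i) * (\<Sum>j\<in>B. g j * w j)"
proof -
  have E1: "1 / q^2 * (\<Sum>i\<in>A. g i * v i) * (\<Sum>j\<in>B. g j * w j) = (\<Sum>i\<in>A. \<Sum>j\<in>B. 1 / q^2 * (g i * v i * (g j * w j)))"
  proof -
    have "1 / q^2 * (\<Sum>i\<in>A. g i * v i) * (\<Sum>j\<in>B. g j * w j) = 1 / q^2 * ((\<Sum>i\<in>A. g i * v i) * (\<Sum>j\<in>B. g j * w j))"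
      by simp
    also have "\<dots> = 1 / q^2 * (\<Sum>i\<in>A. \<Sum>j\<in>B. g i * v i * (g j * w j))"
      by (simp only: sum_product)
    also have "\<dots> = (\<Sum>i\<in>A. \<Sum>j\<in>B. 1 / q^2 * (g i * v i * (g j * w j)))"
      by (simp only: sum_distrib_left)
    finally show ?thesis .
  qed
  have E2: "1 / q * (- (\<Sum>i\<in>A. \<Sum>j\<in>B. H i j * v i * w j)) = (\<Sum>i\<in>A. \<Sum>j\<in>B. - (1 / q * (H i j * v i * w j)))"
    by (simp add: sum_distrib_left sum_negf)
  have E3: "- (\<Sum>i\<in>A. \<Sum>j\<in>B. (H i j * q - g j * g i) / (q * q) * v i * w j)
      = (\<Sum>i\<in>A. \<Sum>j\<in>B. - (1 / q * (H i j * v i * w j)) + 1 / q^2 * (g i * v i * (g j * w j)))"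
    unfolding sum_negf[symmetric]
    by (intro sum.cong refl) (use assms(1) in \<open>simp add: field_simps power2_eq_square\<close>)
  show ?thesis unfolding E1 E2 E3 by (simp only: sum.distrib)
qed

lemma alg2:
  fixes H :: "'a \<Rightarrow> 'b \<Rightarrow> real"
  assumes "\<forall>j. (\<Sum>i\<in>A. H i j * x i) = e * g j" "finite A" "finite B"
  shows "(\<Sum>i\<in>A. \<Sum>j\<in>B. H i j * x i * v j) = e * (\<Sum>j\<in>B. g j * v j)"
proof -
  have "(\<Sum>i\<in>A. \<Sum>j\<in>B. H i j * x i * v j) = (\<Sum>j\<in>B. (\<Sum>i\<in>A. H i j * x i) * v j)"
    by (subst sum.swap) (simp add: sum_distrib_right)
  also have "\<dots> = e * (\<Sum>j\<in>B. g j * v j)" using assms(1) by (simp add: sum_distrib_left mult.assoc)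
  finally show ?thesis .
qed

lemma hsym:
  fixes H :: "'a \<Rightarrow> 'a \<Rightarrow> real"
  assumes "\<forall>i j. H i j = H j i"
  shows "(\<Sum>i\<in>A. \<Sum>j\<in>A. H i j * v i * w j) = (\<Sum>i\<in>A. \<Sum>j\<in>A. H i j * w i * v j)"
proof -
  have "(\<Sum>i\<in>A. \<Sum>j\<in>A. H i j * v i * w j) = (\<Sum>j\<in>A. \<Sum>i\<in>A. H i j * v i * w j)" by (rule sum.swap)
  also have "\<dots> = (\<Sum>j\<in>A. \<Sum>i\<in>A. H j i * w j * v i)" using assms by (simp add: mult.commute mult.left_commute)
  finally show ?thesis .
qed

lemma bil:
  fixes H :: "'a \<Rightarrow> 'a \<Rightarrow> real"
  assumes "\<forall>i j. H i j = H j i"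
  shows "(\<Sum>i\<in>A. \<Sum>j\<in>A. H i j * (u i + a * y i) * (u j + a * y j))
    = (\<Sum>i\<in>A. \<Sum>j\<in>A. H i j * u i * u j) + 2 * a * (\<Sum>i\<in>A. \<Sum>j\<in>A. H i j * y i * u j)
      + a^2 * (\<Sum>i\<in>A. \<Sum>j\<in>A. H i j * y i * y j)"
proof -
  have s: "(\<Sum>i\<in>A. \<Sum>j\<in>A. H i j * u i * y j) = (\<Sum>i\<in>A. \<Sum>j\<in>A. H i j * y i * u j)"
    by (rule hsym[OF assms])
  have "(\<Sum>i\<in>A. \<Sum>j\<in>A. H i j * (u i + a * y i) * (u j + a * y j))
     = (\<Sum>i\<in>A. \<Sum>j\<in>A. H i j * u i * u j + a * (H i j * u i * y j) + a * (H i j * y i * u j) + a^2 * (H i j * y i * y j))"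
    by (intro sum.cong refl) (simp add: algebra_simps power2_eq_square)
  also have "\<dots> = (\<Sum>i\<in>A. \<Sum>j\<in>A. H i j * u i * u j) + a * (\<Sum>i\<in>A. \<Sum>j\<in>A. H i j * u i * y j)
      + a * (\<Sum>i\<in>A. \<Sum>j\<in>A. H i j * y i * u j) + a^2 * (\<Sum>i\<in>A. \<Sum>j\<in>A. H i j * y i * y j)"
    by (simp add: sum.distrib sum_distrib_left)
  finally show ?thesis using s by simp
qed

lemma hess_axis:
  fixes f :: "real^'n \<Rightarrow> real"
  shows "hess f x (axis i 1) (axis j 1) = pd i (pd j f) x"
  unfolding hess_def by (simp add: axis_def if_distrib[of "(*) _"] cong: if_cong)

lemma dif_diff:
  fixes f :: "real^'n \<Rightarrow> real"
  shows "dif f x (v - a *\<^sub>R y) = dif f x v - a * dif f x y"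
  unfolding dif_def by (simp add: algebra_simps sum_subtractf sum_distrib_left)

lemma hess_zero:
  fixes f :: "real^'n \<Rightarrow> real"
  shows "hess f x 0 0 = 0" unfolding hess_def by simp

lemma aux3: "X \<noteq> 0 \<Longrightarrow> k \<noteq> 0 \<Longrightarrow> hx \<noteq> 0 \<Longrightarrow> (-X * dv) * (-X * dw) / (-X * (k * hx)) = -X * dv * dw / (k * hx)"
  for X k hx dv dw :: real by (simp add: field_simps)
lemma aux4: "k \<noteq> 0 \<Longrightarrow> hx \<noteq> 0 \<Longrightarrow> (dv / (k * hx))^2 * (-X * (k * hx)) = -X * dv * dv / (k * hx)"
  for X k hx dv :: real by (simp add: field_simps power2_eq_square)
lemma alg3:
  fixes hx c k G dv dw :: real
  assumes "hx + c \<noteq> 0" "hx \<noteq> 0" "k \<noteq> 0" "k - 1 \<noteq> 0"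
  shows "1 / (hx + c) * G + 1 / (hx + c)^2 * dv * dw
    = 1 / (hx + c) * (G - (-(k - 1) * dv) * (-(k - 1) * dw) / (-(k - 1) * (k * hx)))
      + (hx - c * (k - 1)) / (k * hx) * (1 / (hx + c)^2) * dv * dw"
proof -
  define q where "q = hx + c"
  have q: "q \<noteq> 0" using assms q_def by simp
  have c: "c = q - hx" using q_def by simp
  show ?thesis unfolding aux3[OF assms(4,3,2)] unfolding q_def[symmetric] unfolding c
    using q assms by (simp add: field_simps power2_eq_square)
qed

lemma alg4:
  fixes hx c k Guu dv a :: real
  assumes "hx + c \<noteq> 0" "hx \<noteq> 0" "k \<noteq> 0" "a = dv / (k * hx)"
  shows "1 / (hx + c) * (Guu + 2 * a * 0 + a^2 * (-(k - 1) * (k * hx))) + 1 / (hx + c)^2 * dv * dv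
    = 1 / (hx + c) * Guu + dv * dv * ((hx - c * (k - 1)) / (k * hx * (hx + c)^2))"
proof -
  define q where "q = hx + c"
  have q: "q \<noteq> 0" using assms q_def by simp
  have c: "c = q - hx" using q_def by simp
  show ?thesis unfolding assms(4) aux4[OF assms(3,2)] unfolding q_def[symmetric] unfolding c
    using q assms by (simp add: field_simps power2_eq_square)
qed

lemma alg5:
  fixes L q G dv dw :: real
  assumes "L > 0" "q \<noteq> 0"
  shows "1 / (L * q) * (L * G) + 1 / (L * q)^2 * (L * dv) * (L * dw) = 1 / q * G + 1 / q^2 * dv * dw"
  using assms by (simp add: field_simps power2_eq_square)

theorem mainTheorem16:
  fixes U :: "(real^'n) set" and h :: "real^'n \<Rightarrow> real" and k :: real
  assumes U_open: "open U" and U_conn: "connected U"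
    and U_cone: "\<forall>t>0. \<forall>x\<in>U. t *\<^sub>R x \<in> U"
    and h_smooth: "smooth_on U h"
    and h_pos: "\<forall>x\<in>U. h x > 0"
    and k_gt: "k > 1"
    and h_hom: "\<forall>t>0. \<forall>x\<in>U. h (t *\<^sub>R x) = t powr k * h x"
    and gU_pd: "\<forall>x\<in>U. h x = 1 \<longrightarrow> (\<forall>v. v \<noteq> 0 \<and> dif h x v = 0 \<longrightarrow> gU h x v v > 0)"
  shows
    "(\<forall>c. \<forall>x\<in>Uc U h k c. \<forall>v w.
        gprime h c x v w = 1 / (h x + c) * gU h x v w + 1 / (h x + c)^2 * dif h x v * dif h x w)
   \<and> (\<forall>c. \<forall>x\<in>Uc U h k c. \<forall>v w.
        gprime h c x v w = 1 / (h x + c) * gcheck h x v w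
          + (h x - c * (k - 1)) / (k * h x) * (1 / (h x + c)^2) * dif h x v * dif h x w)
   \<and> (\<forall>c. (\<forall>x\<in>Uc U h k c. \<forall>v w. gprime h c x v w = gprime h c x w v)
        \<and> (\<forall>x\<in>Uc U h k c. \<forall>v. v \<noteq> 0 \<longrightarrow> gprime h c x v v > 0)
        \<and> (\<forall>i j. smooth_on (Uc U h k c) (\<lambda>x. gprime h c x (axis i 1) (axis j 1))))
   \<and> (\<forall>c c'. c * c' > 0 \<longrightarrow>
        (\<exists>l>0. (\<lambda>x. l *\<^sub>R x) ` Uc U h k c = Uc U h k c'
           \<and> (\<forall>x\<in>Uc U h k c. \<forall>v w.
                gprime h c' (l *\<^sub>R x) (l *\<^sub>R v) (l *\<^sub>R w) = gprime h c x v w)))"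
proof -
  have kne0: "k \<noteq> 0" and k1ne0: "k - 1 \<noteq> 0" using k_gt by auto
  have ldh: "ld h y i" if "y \<in> U" for y i
    using smooth_ld[OF h_smooth that, of "[]" i] by simp
  have ld1: "ld (pd j h) y i" if "y \<in> U" for y i j
    using smooth_ld[OF h_smooth that, of "[j]" i] by simp
  have hcont: "continuous_on U h" using smooth_cont[OF h_smooth, of "[]"] by simp
  have cont1: "continuous_on U (pd j h)" for j using smooth_cont[OF h_smooth, of "[j]"] by simp
  have cont2: "continuous_on U (pd i (pd j h))" for i j using smooth_cont[OF h_smooth, of "[i, j]"] by simp
  have ldhA: "\<forall>y\<in>U. ld h y i" for i using ldh by blast
  have ld1A: "\<forall>y\<in>U. ld (pd j h) y i" for i j using ld1 by blast
  have cont1A: "\<forall>i. continuous_on U (pd i h)" using cont1 by blast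
  have cont2A: "\<forall>i. continuous_on U (pd i (pd j h))" for j using cont2 by blast
  have hom1': "pd j h (t *\<^sub>R y) = t powr (k - 1) * pd j h y" if "t > 0" "y \<in> U" for j t y
    using pd_hom[OF U_open U_cone h_hom ldhA that] by simp
  have hom1: "\<forall>t>0. \<forall>y\<in>U. pd j h (t *\<^sub>R y) = t powr (k - 1) * pd j h y" for j
    using hom1' by blast
  have hom2: "pd i (pd j h) (t *\<^sub>R y) = t powr (k - 1 - 1) * pd i (pd j h) y" if "t > 0" "y \<in> U" for i j t y
    using pd_hom[OF U_open U_cone hom1[of j] ld1A that] by simp
  have eul0: "(\<Sum>i\<in>UNIV. pd i h x * x$i) = k * h x" if "x \<in> U" for x
    using euler[OF U_open U_cone h_hom _ cont1A that] ldhA by blast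
  have eul1: "(\<Sum>i\<in>UNIV. pd i (pd j h) x * x$i) = (k - 1) * pd j h x" if "x \<in> U" for x j
    using euler[OF U_open U_cone hom1[of j] _ cont2A[of j] that] ld1A by blast
  have symH: "pd i (pd j h) x = pd j (pd i h) x" if "x \<in> U" for x i j
    by (rule schwarz[OF U_open that ldhA ldhA ld1A ld1A cont2 cont2])
  have Vsub: "Uc U h k c \<subseteq> U" for c unfolding Uc_def by auto
  have Vpos: "h x + c > 0" if "x \<in> Uc U h k c" for x c
  proof (cases "c \<le> 0")
    case True then show ?thesis using that unfolding Uc_def by auto
  next
    case False then show ?thesis using that h_pos unfolding Uc_def by auto
  qed
  have Vcoef: "h x - c * (k - 1) > 0" if "x \<in> Uc U h k c" for x c
  proof (cases "c \<le> 0")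
    case True
    have "c * (k - 1) \<le> 0" using True k_gt by (simp add: mult_nonpos_nonneg)
    then show ?thesis using that h_pos True unfolding Uc_def by auto
  next
    case False then show ?thesis using that unfolding Uc_def by auto
  qed
  have Vopen: "open (Uc U h k c)" for c
  proof (cases "c \<le> 0")
    case True
    have "continuous_on U (\<lambda>x. h x + c)" by (intro continuous_intros hcont)
    from iffD1[OF continuous_on_open_vimage[OF U_open] this]
    have "open ((\<lambda>x. h x + c) -` {0<..} \<inter> U)" by simp
    moreover have "(\<lambda>x. h x + c) -` {0<..} \<inter> U = Uc U h k c" using True unfolding Uc_def by auto
    ultimately show ?thesis by simp
  next
    case False
    have "continuous_on U (\<lambda>x. h x - c * (k - 1))" by (intro continuous_intros hcont)
    from iffD1[OF continuous_on_open_vimage[OF U_open] this]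
    have "open ((\<lambda>x. h x - c * (k - 1)) -` {0<..} \<inter> U)" by simp
    moreover have "(\<lambda>x. h x - c * (k - 1)) -` {0<..} \<inter> U = Uc U h k c" using False unfolding Uc_def by auto
    ultimately show ?thesis by simp
  qed
  have pdL: "pd j (\<lambda>x. ln (h x + c)) y = pd j h y / (h y + c)" if "y \<in> Uc U h k c" for y j c
  proof -
    have yU: "y \<in> U" using that Vsub by auto
    have p: "h (y + 0 *\<^sub>R axis j 1) + c > 0" using Vpos[OF that] by simp
    have d1: "((\<lambda>t. h (y + t *\<^sub>R axis j 1) + c) has_real_derivative pd j h y + 0) (at 0)"
      by (intro DERIV_add pd_has ldh[OF yU] DERIV_const)
    have "((\<lambda>t. ln (h (y + t *\<^sub>R axis j 1) + c)) has_real_derivative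
        1 / (h (y + 0 *\<^sub>R axis j 1) + c) * (pd j h y + 0)) (at 0)"
      by (rule DERIV_chain2[OF DERIV_ln_divide[OF p] d1])
    from has_pd(2)[OF this] show ?thesis by simp
  qed
  have pdQ: "pd i (\<lambda>y. pd j h y / (h y + c)) x
      = (pd i (pd j h) x * (h x + c) - pd j h x * pd i h x) / ((h x + c) * (h x + c))"
    if "x \<in> Uc U h k c" for x i j c
  proof -
    have xU: "x \<in> U" using that Vsub by auto
    have nz: "h (x + 0 *\<^sub>R axis i 1) + c \<noteq> 0" using Vpos[OF that] by simp
    have d1: "((\<lambda>t. h (x + t *\<^sub>R axis i 1) + c) has_real_derivative pd i h x + 0) (at 0)"
      by (intro DERIV_add pd_has ldh[OF xU] DERIV_const)
    have d2: "((\<lambda>t. pd j h (x + t *\<^sub>R axis i 1)) has_real_derivative pd i (pd j h) x) (at 0)"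
      by (intro pd_has ld1[OF xU])
    have "((\<lambda>t. pd j h (x + t *\<^sub>R axis i 1) / (h (x + t *\<^sub>R axis i 1) + c)) has_real_derivative
      (pd i (pd j h) x * (h (x + 0 *\<^sub>R axis i 1) + c) - pd j h (x + 0 *\<^sub>R axis i 1) * (pd i h x + 0))
        / ((h (x + 0 *\<^sub>R axis i 1) + c) * (h (x + 0 *\<^sub>R axis i 1) + c))) (at 0)"
      by (rule DERIV_divide[OF d2 d1 nz])
    from has_pd(2)[OF this] show ?thesis by simp
  qed
  have pd2L: "pd i (pd j (\<lambda>x. ln (h x + c))) x
      = (pd i (pd j h) x * (h x + c) - pd j h x * pd i h x) / ((h x + c) * (h x + c))"
    if "x \<in> Uc U h k c" for x i j c
  proof -
    have "pd i (pd j (\<lambda>x. ln (h x + c))) x = pd i (\<lambda>y. pd j h y / (h y + c)) x"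
      by (rule pd_local[OF Vopen that]) (use pdL in blast)
    then show ?thesis using pdQ[OF that] by simp
  qed
  have F1: "gprime h c x v w = 1 / (h x + c) * gU h x v w + 1 / (h x + c)^2 * dif h x v * dif h x w"
    if "x \<in> Uc U h k c" for x c v w
  proof -
    have q: "h x + c \<noteq> 0" using Vpos[OF that] by simp
    have "gprime h c x v w = - (\<Sum>i\<in>UNIV. \<Sum>j\<in>UNIV.
        (pd i (pd j h) x * (h x + c) - pd j h x * pd i h x) / ((h x + c) * (h x + c)) * v$i * w$j)"
      unfolding gprime_def hess_def using pd2L[OF that] by simp
    also have "\<dots> = 1 / (h x + c) * (- (\<Sum>i\<in>UNIV. \<Sum>j\<in>UNIV. pd i (pd j h) x * v$i * w$j))
        + 1 / (h x + c)^2 * (\<Sum>i\<in>UNIV. pd i h x * v$i) * (\<Sum>j\<in>UNIV. pd j h x * w$j)"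
      by (rule alg1[OF q]) auto
    finally show ?thesis unfolding gU_def hess_def dif_def .
  qed
  have gUxv: "gU h x x v = -(k - 1) * dif h x v" if "x \<in> U" for x v
  proof -
    have "(\<Sum>i\<in>UNIV. \<Sum>j\<in>UNIV. pd i (pd j h) x * x$i * v$j) = (k - 1) * (\<Sum>j\<in>UNIV. pd j h x * v$j)"
      by (rule alg2) (use eul1[OF that] in auto)
    then show ?thesis unfolding gU_def hess_def dif_def by (simp add: algebra_simps)
  qed
  have difxx: "dif h x x = k * h x" if "x \<in> U" for x
    using eul0[OF that] unfolding dif_def .
  have F2: "gprime h c x v w = 1 / (h x + c) * gcheck h x v w
          + (h x - c * (k - 1)) / (k * h x) * (1 / (h x + c)^2) * dif h x v * dif h x w"
    if "x \<in> Uc U h k c" for x c v w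
  proof -
    have xU: "x \<in> U" using that Vsub by auto
    have gc: "gcheck h x v w = gU h x v w - (-(k - 1) * dif h x v) * (-(k - 1) * dif h x w) / (-(k - 1) * (k * h x))"
      unfolding gcheck_def gUxv[OF xU] difxx[OF xU] ..
    have hx: "h x \<noteq> 0" using h_pos xU by auto
    have q: "h x + c \<noteq> 0" using Vpos[OF that] by simp
    show ?thesis unfolding F1[OF that] gc by (rule alg3[OF q hx kne0 k1ne0])
  qed
  have gUpos: "gU h x u u > 0" if xU: "x \<in> U" and u: "u \<noteq> 0" and du: "dif h x u = 0" for x u
  proof -
    have hx: "h x > 0" using h_pos xU by auto
    define t where "t = h x powr (-1 / k)"
    have t: "t > 0" using hx by (simp add: t_def)
    have yU: "t *\<^sub>R x \<in> U" using U_cone t xU by auto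
    have "t powr k = h x powr (-1 / k * k)" unfolding t_def by (rule powr_powr)
    also have "\<dots> = inverse (h x)" using kne0 hx by (simp add: powr_minus)
    finally have "h (t *\<^sub>R x) = 1" using h_hom t xU hx by simp
    moreover have "dif h (t *\<^sub>R x) u = 0"
    proof -
      have "dif h (t *\<^sub>R x) u = t powr (k - 1) * dif h x u"
        unfolding dif_def using hom1 t xU by (simp add: sum_distrib_left mult.assoc)
      then show ?thesis using du by simp
    qed
    ultimately have "gU h (t *\<^sub>R x) u u > 0" using gU_pd yU u by blast
    moreover have "gU h (t *\<^sub>R x) u u = t powr (k - 1 - 1) * gU h x u u"
      unfolding gU_def hess_def using hom2[OF t xU] by (simp add: sum_distrib_left mult.assoc)
    ultimately show ?thesis using t by (simp add: zero_less_mult_iff)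
  qed
  have part3: "\<forall>c. (\<forall>x\<in>Uc U h k c. \<forall>v w. gprime h c x v w = gprime h c x w v)
        \<and> (\<forall>x\<in>Uc U h k c. \<forall>v. v \<noteq> 0 \<longrightarrow> gprime h c x v v > 0)
        \<and> (\<forall>i j. smooth_on (Uc U h k c) (\<lambda>x. gprime h c x (axis i 1) (axis j 1)))"
  proof (intro allI conjI ballI impI)
    fix c x v w assume x: "x \<in> Uc U h k c"
    have xU: "x \<in> U" using x Vsub by auto
    have "gU h x v w = gU h x w v"
      unfolding gU_def hess_def by (intro arg_cong[where f=uminus] hsym) (use symH[OF xU] in auto)
    then show "gprime h c x v w = gprime h c x w v" unfolding F1[OF x] by simp
  next
    fix c x and v :: "real^'n" assume x: "x \<in> Uc U h k c" and v: "v \<noteq> 0"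
    have xU: "x \<in> U" using x Vsub by auto
    have hx: "h x > 0" using h_pos xU by auto
    have q: "h x + c > 0" using Vpos[OF x] .
    have coef: "h x - c * (k - 1) > 0" using Vcoef[OF x] .
    define dv where "dv = dif h x v"
    define a where "a = dv / (k * h x)"
    define u where "u = v - a *\<^sub>R x"
    have veq: "v = u + a *\<^sub>R x" by (simp add: u_def)
    have du: "dif h x u = 0"
      unfolding u_def dif_diff difxx[OF xU] using hx kne0 by (simp add: a_def dv_def)
    have hexp: "hess h x v v = hess h x u u + 2 * a * hess h x x u + a^2 * hess h x x x"
      unfolding veq hess_def vector_add_component vector_scaleR_component real_scaleR_def
      by (rule bil) (use symH[OF xU] in auto)
    have gexp: "gU h x v v = gU h x u u + 2 * a * 0 + a^2 * (-(k - 1) * (k * h x))"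
    proof -
      have "gU h x x u = 0" using gUxv[OF xU, of u] du by simp
      moreover have "gU h x x x = -(k - 1) * (k * h x)" using gUxv[OF xU, of x] difxx[OF xU] by simp
      ultimately show ?thesis using hexp unfolding gU_def by (simp add: algebra_simps)
    qed
    have main: "gprime h c x v v = 1 / (h x + c) * gU h x u u + dv * dv * ((h x - c * (k - 1)) / (k * h x * (h x + c)^2))"
      unfolding F1[OF x] gexp dv_def[symmetric]
      by (rule alg4) (use q hx kne0 in \<open>auto simp: a_def\<close>)
    have cpos: "(h x - c * (k - 1)) / (k * h x * (h x + c)^2) > 0" using coef hx q k_gt by simp
    show "gprime h c x v v > 0"
    proof (cases "u = 0")
      case True
      then have "v = a *\<^sub>R x" using veq by simp
      then have "a \<noteq> 0" using v by auto
      then have "dv \<noteq> 0" using hx kne0 by (simp add: a_def)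
      then have dd: "dv * dv > 0" by (metis linorder_neq_iff mult_neg_neg mult_pos_pos)
      have "dv * dv * ((h x - c * (k - 1)) / (k * h x * (h x + c)^2)) > 0" by (rule mult_pos_pos[OF dd cpos])
      moreover have "gU h x u u = 0" using True by (simp add: gU_def hess_zero)
      ultimately show ?thesis unfolding main by simp
    next
      case False
      then have "gU h x u u > 0" using gUpos[OF xU _ du] by simp
      then have "1 / (h x + c) * gU h x u u > 0" using q by simp
      moreover have "dv * dv * ((h x - c * (k - 1)) / (k * h x * (h x + c)^2)) \<ge> 0"
        by (rule mult_nonneg_nonneg[OF _ less_imp_le[OF cpos]]) simp
      ultimately show ?thesis unfolding main by linarith
    qed
  next
    fix c and i j :: 'n
    define V where "V = Uc U h k c"
    have Vo: "open V" using Vopen by (simp add: V_def)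
    have VU: "V \<subseteq> U" using Vsub by (simp add: V_def)
    have Vp: "\<forall>x\<in>V. h x + c > 0" using Vpos by (simp add: V_def)
    note props = SS_props[OF Vo VU h_smooth Vp]
    define Q where "Q = (\<lambda>y. iter_pd [j] h y * (1 / (h y + c)))"
    have QS: "Q \<in> SS h c" unfolding Q_def by (rule SS.mul[OF SS.it SS.rc])
    obtain G where G: "G \<in> SS h c" "\<forall>x\<in>V. pd i Q x = G x" using props[OF QS] by blast
    have mS: "(\<lambda>x. -1 * G x) \<in> SS h c" by (rule SS.mul[OF SS.cst G(1)])
    have eq: "\<forall>x\<in>V. gprime h c x (axis i 1) (axis j 1) = -1 * G x"
    proof
      fix x assume x: "x \<in> V"
      have "\<forall>y\<in>V. pd j (\<lambda>x. ln (h x + c)) y = Q y"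
        using pdL unfolding Q_def V_def by (simp add: divide_inverse)
      then have "pd i (pd j (\<lambda>x. ln (h x + c))) x = pd i Q x" by (rule pd_local[OF Vo x])
      then show "gprime h c x (axis i 1) (axis j 1) = -1 * G x"
        unfolding gprime_def hess_axis using G(2) x by simp
    qed
    show "smooth_on (Uc U h k c) (\<lambda>x. gprime h c x (axis i 1) (axis j 1))"
      unfolding V_def[symmetric]
      by (rule smooth_coind[OF Vo _ _ _ mS eq]) (use props in blast)+
  qed
  have part4: "\<forall>c c'. c * c' > 0 \<longrightarrow>
        (\<exists>l>0. (\<lambda>x. l *\<^sub>R x) ` Uc U h k c = Uc U h k c'
           \<and> (\<forall>x\<in>Uc U h k c. \<forall>v w.
                gprime h c' (l *\<^sub>R x) (l *\<^sub>R v) (l *\<^sub>R w) = gprime h c x v w))"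
  proof (intro allI impI)
    fix c c' :: real assume cc: "c * c' > 0"
    have r0: "c' / c > 0" using cc by (metis divide_pos_pos mult_pos_pos zero_less_mult_iff divide_neg_neg)
    have cne: "c \<noteq> 0" using cc by auto
    define l where "l = (c' / c) powr (1 / k)"
    have l0: "l > 0" unfolding l_def powr_gt_zero using r0 by linarith
    have k1: "1 / k * k = 1" using kne0 by simp
    have lk: "l powr k = c' / c" unfolding l_def powr_powr k1 using powr_one[OF less_imp_le[OF r0]] .
    define L where "L = l powr k"
    have L0: "L > 0" using l0 by (simp add: L_def)
    have cL: "c' = L * c" using lk cne by (simp add: L_def)
    have hl: "h (l *\<^sub>R x) = L * h x" if "x \<in> U" for x using h_hom l0 that by (simp add: L_def)
    have sgn: "c \<le> 0 \<longleftrightarrow> c' \<le> 0" using cc by (auto simp: zero_less_mult_iff)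
    have mem: "l *\<^sub>R x \<in> Uc U h k c' \<longleftrightarrow> x \<in> Uc U h k c" if xU: "x \<in> U" for x
    proof -
      have lxU: "l *\<^sub>R x \<in> U" using U_cone l0 xU by auto
      have e1: "h (l *\<^sub>R x) + c' = L * (h x + c)" using hl[OF xU] cL by (simp add: algebra_simps)
      have e2: "h (l *\<^sub>R x) - c' * (k - 1) = L * (h x - c * (k - 1))" using hl[OF xU] cL by (simp add: algebra_simps)
      have p1: "0 < h (l *\<^sub>R x) + c' \<longleftrightarrow> 0 < h x + c" unfolding e1 using L0 by (simp add: zero_less_mult_iff)
      have p2: "0 < h (l *\<^sub>R x) - c' * (k - 1) \<longleftrightarrow> 0 < h x - c * (k - 1)"
        unfolding e2 using L0 by (simp add: zero_less_mult_iff)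
      show ?thesis unfolding Uc_def using sgn lxU xU p1 p2 by auto
    qed
    have img: "(\<lambda>x. l *\<^sub>R x) ` Uc U h k c = Uc U h k c'"
    proof
      show "(\<lambda>x. l *\<^sub>R x) ` Uc U h k c \<subseteq> Uc U h k c'" using mem Vsub by blast
    next
      show "Uc U h k c' \<subseteq> (\<lambda>x. l *\<^sub>R x) ` Uc U h k c"
      proof
        fix y assume y: "y \<in> Uc U h k c'"
        have yU: "y \<in> U" using y Vsub by auto
        define x where "x = (1 / l) *\<^sub>R y"
        have xU: "x \<in> U" using U_cone l0 yU by (simp add: x_def)
        have yx: "y = l *\<^sub>R x" using l0 by (simp add: x_def)
        then have "x \<in> Uc U h k c" using mem[OF xU] y by simp
        then show "y \<in> (\<lambda>x. l *\<^sub>R x) ` Uc U h k c" using yx by blast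
      qed
    qed
    have lp1: "l powr (k - 1) * l = L" unfolding L_def using l0 by (simp add: powr_diff)
    have lp2: "l powr (k - 1 - 1) * (l * l) = L" unfolding L_def using l0 by (simp add: powr_diff power2_eq_square)
    have iso: "gprime h c' (l *\<^sub>R x) (l *\<^sub>R v) (l *\<^sub>R w) = gprime h c x v w"
      if x: "x \<in> Uc U h k c" for x v w
    proof -
      have xU: "x \<in> U" using x Vsub by auto
      have lx: "l *\<^sub>R x \<in> Uc U h k c'" using mem[OF xU] x by simp
      have gs: "gU h (l *\<^sub>R x) (l *\<^sub>R v) (l *\<^sub>R w) = L * gU h x v w"
      proof -
        have E: "\<And>i j. pd i (pd j h) (l *\<^sub>R x) * (l *\<^sub>R v)$i * (l *\<^sub>R w)$j = L * (pd i (pd j h) x * v$i * w$j)"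
        proof -
          fix i j
          have "pd i (pd j h) (l *\<^sub>R x) * (l *\<^sub>R v)$i * (l *\<^sub>R w)$j
              = (l powr (k - 1 - 1) * (l * l)) * (pd i (pd j h) x * v$i * w$j)"
            using hom2[OF l0 xU] by (simp add: algebra_simps)
          then show "pd i (pd j h) (l *\<^sub>R x) * (l *\<^sub>R v)$i * (l *\<^sub>R w)$j = L * (pd i (pd j h) x * v$i * w$j)"
            unfolding lp2 .
        qed
        show ?thesis unfolding gU_def hess_def by (simp only: E mult_minus_right sum_distrib_left)
      qed
      have ds: "dif h (l *\<^sub>R x) (l *\<^sub>R v) = L * dif h x v" for v
      proof -
        have E: "\<And>i. pd i h (l *\<^sub>R x) * (l *\<^sub>R v)$i = L * (pd i h x * v$i)"
        proof -
          fix i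
          have "pd i h (l *\<^sub>R x) * (l *\<^sub>R v)$i = (l powr (k - 1) * l) * (pd i h x * v$i)"
            using hom1[of i] l0 xU by (simp add: algebra_simps)
          then show "pd i h (l *\<^sub>R x) * (l *\<^sub>R v)$i = L * (pd i h x * v$i)" unfolding lp1 .
        qed
        show ?thesis unfolding dif_def by (simp only: E sum_distrib_left)
      qed
      have hq: "h (l *\<^sub>R x) + c' = L * (h x + c)" using hl[OF xU] cL by (simp add: algebra_simps)
      show ?thesis unfolding F1[OF lx] F1[OF x] gs ds hq
        by (rule alg5[OF L0]) (use Vpos[OF x] in simp)
    qed
    show "\<exists>l>0. (\<lambda>x. l *\<^sub>R x) ` Uc U h k c = Uc U h k c'
           \<and> (\<forall>x\<in>Uc U h k c. \<forall>v w. gprime h c' (l *\<^sub>R x) (l *\<^sub>R v) (l *\<^sub>R w) = gprime h c x v w)"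
      using l0 img iso by blast
  qed
  show ?thesis using F1 F2 part3 part4 by blast
qed

end
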